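(* Let $n\in\{2,3,4,5\}$, let $\zeta_n$ be a primitive $n$-th root of unity, and let $$M_q=\begin{pmatrix}\mathcal{R}(q) & \mathcal{V}(q)\\ \mathcal{S}(q) & \mathcal{U}(q)\end{pmatrix}\in G_q.$$ If the image of $M_q|_{q=1}\in\mathrm{SL}(2,\mathbb{Z})$ in $\mathrm{GL}(2,\mathbb{Z}/n\mathbb{Z})$ equals $\pm E_2$ (where $E_2$ is the identity matrix), then $\mathcal{R}(\zeta_n)=\mathcal{U}(\zeta_n)=\pm\zeta_n^j$ for some $0\le j<n$ and $\mathcal{V}(\zeta_n)=\mathcal{S}(\zeta_n)=0$.
   Context: Let $q$ be a formal parameter and let $R_q=\begin{pmatrix} q & 1\\ 0 & 1\end{pmatrix}$, $S_q=\begin{pmatrix} 0 & -q^{-1}\\ 1 & 0\end{pmatrix}\in \mathrm{GL}(2,\mathbb{Z}[q,q^{-1}])$. Let $G_q=\langle R_q,S_q\rangle$ be the group they generate. *)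

theory Defs
  imports "HOL-Analysis.Analysis" "HOL-Number_Theory.Cong"
begin

definition mat2 :: "complex \<Rightarrow> complex \<Rightarrow> complex \<Rightarrow> complex \<Rightarrow> complex^2^2" where
  "mat2 a b c d = (\<chi> i j. if i = 1 then (if j = 1 then a else b) else (if j = 1 then c else d))"

text \<open>Entries of a matrix of Laurent polynomials in Z[q,q^-1] are represented as
  functions of q; such a Laurent polynomial is determined by its values at all q \<noteq> 0.\<close>
definition Rq :: "complex \<Rightarrow> complex^2^2" where
  "Rq q = mat2 q 1 0 1"
definition Sq :: "complex \<Rightarrow> complex^2^2" where
  "Sq q = mat2 0 (- inverse q) 1 0"
definition Rq_inv :: "complex \<Rightarrow> complex^2^2" where
  "Rq_inv q = mat2 (inverse q) (- inverse q) 0 1"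
definition Sq_inv :: "complex \<Rightarrow> complex^2^2" where
  "Sq_inv q = mat2 0 1 (- q) 0"

datatype gen = GR | GRi | GS | GSi

fun gen_mat :: "gen \<Rightarrow> complex \<Rightarrow> complex^2^2" where
  "gen_mat GR = Rq" | "gen_mat GRi = Rq_inv" | "gen_mat GS = Sq" | "gen_mat GSi = Sq_inv"

fun word_mat :: "gen list \<Rightarrow> complex \<Rightarrow> complex^2^2" where
  "word_mat [] q = mat 1"
| "word_mat (g # w) q = gen_mat g q ** word_mat w q"

definition Gq :: "(complex \<Rightarrow> complex^2^2) set" where
  "Gq = {M. \<exists>w. \<forall>q. q \<noteq> 0 \<longrightarrow> M q = word_mat w q}"

definition primitive_root_of_unity :: "nat \<Rightarrow> complex \<Rightarrow> bool" where
  "primitive_root_of_unity n z \<longleftrightarrow> n > 0 \<and> z ^ n = 1 \<and> (\<forall>k. 0 < k \<and> k < n \<longrightarrow> z ^ k \<noteq> 1)"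

end

theory Submission
  imports Defs "HOL-Computational_Algebra.Polynomial"
begin

type_synonym imat = "int \<times> int \<times> int \<times> int"
type_synonym pmat = "int poly \<times> int poly \<times> int poly \<times> int poly"

fun imul :: "imat \<Rightarrow> imat \<Rightarrow> imat" where
  "imul (a,b,c,d) (e,f,g,h) = (a*e+b*g, a*f+b*h, c*e+d*g, c*f+d*h)"

fun ismul :: "int \<Rightarrow> imat \<Rightarrow> imat" where
  "ismul s (a,b,c,d) = (s*a, s*b, s*c, s*d)"

fun imod :: "nat \<Rightarrow> imat \<Rightarrow> imat" where
  "imod n (a,b,c,d) = (a mod int n, b mod int n, c mod int n, d mod int n)"

fun pmul :: "pmat \<Rightarrow> pmat \<Rightarrow> pmat" where
  "pmul (a,b,c,d) (e,f,g,h) = (a*e+b*g, a*f+b*h, c*e+d*g, c*f+d*h)"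

fun red4 :: "int poly \<Rightarrow> pmat \<Rightarrow> pmat" where
  "red4 F (a,b,c,d) = (pseudo_mod a F, pseudo_mod b F, pseudo_mod c F, pseudo_mod d F)"

fun pscal :: "int \<Rightarrow> nat \<Rightarrow> pmat \<Rightarrow> pmat" where
  "pscal s j (a,b,c,d) = (smult s (monom 1 j * a), smult s (monom 1 j * b),
     smult s (monom 1 j * c), smult s (monom 1 j * d))"

fun gen_i :: "gen \<Rightarrow> imat" where
  "gen_i GR = (1,1,0,1)" | "gen_i GRi = (1,-1,0,1)" | "gen_i GS = (0,-1,1,0)" | "gen_i GSi = (0,1,-1,0)"

fun gen_p :: "nat \<Rightarrow> gen \<Rightarrow> pmat" where
  "gen_p n GR = ([:0,1:], 1, 0, 1)"
| "gen_p n GRi = (monom 1 (n-1), - monom 1 (n-1), 0, 1)"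
| "gen_p n GS = (0, - monom 1 (n-1), 1, 0)"
| "gen_p n GSi = (0, 1, [:0,-1:], 0)"

fun cond :: "nat \<Rightarrow> int poly \<Rightarrow> (imat \<times> pmat) list \<Rightarrow> imat \<Rightarrow> pmat \<Rightarrow> gen
   \<Rightarrow> nat \<times> int \<times> int \<times> nat \<Rightarrow> bool" where
  "cond n F tab A B g (k, \<sigma>, s, j) = (k < length tab \<and> \<sigma> \<in> {1,-1} \<and> s \<in> {1,-1} \<and>
     imod n (imul (gen_i g) A) = imod n (ismul \<sigma> (fst (tab ! k))) \<and>
     red4 F (pmul (gen_p n g) B) = red4 F (pscal s j (snd (tab ! k))))"

definition check :: "nat \<Rightarrow> int poly \<Rightarrow> (imat \<times> pmat) list \<Rightarrow> (nat \<times> int \<times> int \<times> nat) list list \<Rightarrow> bool" where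
  "check n F tab cert = (tab \<noteq> [] \<and> hd tab = ((1,0,0,1),(1,0,0,1)) \<and>
     list_all2 (\<lambda>(A,B) cs. list_all2 (cond n F tab A B) [GR,GRi,GS,GSi] cs) tab cert \<and>
     list_all (\<lambda>(A,B). imod n A \<noteq> imod n (1,0,0,1) \<and> imod n A \<noteq> imod n (-1,0,0,-1)) (tl tab))"

definition tab2 :: "(imat \<times> pmat) list" where
  "tab2 = [((1,0,0,1),([:1:],0,0,[:1:])),
    ((1,1,0,1),([:-1:],[:1:],0,[:1:])),
    ((0,1,1,0),(0,[:1:],[:1:],0)),
    ((0,1,1,1),(0,[:1:],[:-1:],[:1:])),
    ((1,1,1,0),([:1:],[:-1:],[:1:],0)),
    ((1,0,1,1),([:-1:],0,[:-1:],[:1:]))]"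

definition cert2 :: "(nat \<times> int \<times> int \<times> nat) list list" where
  "cert2 = [[(1,1,1,0),(1,1,1,0),(2,1,1,0),(2,1,1,0)],
    [(0,1,1,0),(0,1,1,0),(3,1,1,0),(3,1,1,0)],
    [(4,1,1,0),(4,1,1,0),(0,1,1,0),(0,1,1,0)],
    [(5,1,1,0),(5,1,1,0),(1,1,1,0),(1,1,1,0)],
    [(2,1,1,0),(2,1,1,0),(5,1,1,1),(5,1,1,1)],
    [(3,1,1,0),(3,1,1,0),(4,1,1,1),(4,1,1,1)]]"

definition tab3 :: "(imat \<times> pmat) list" where
  "tab3 = [((1,0,0,1),([:1:],0,0,[:1:])),
    ((1,1,0,1),([:0,1:],[:1:],0,[:1:])),
    ((1,2,0,1),([:-1,-1:],[:1,1:],0,[:1:])),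
    ((0,2,1,0),(0,[:1,1:],[:1:],0)),
    ((0,2,1,1),(0,[:1,1:],[:0,1:],[:1:])),
    ((0,2,1,2),(0,[:1,1:],[:-1,-1:],[:1,1:])),
    ((1,2,1,0),([:1:],[:-1:],[:1:],0)),
    ((2,2,1,0),([:1,1:],[:0,-1:],[:1:],0)),
    ((1,0,1,1),([:0,1:],0,[:0,1:],[:1:])),
    ((2,1,1,1),([:-1:],[:1:],[:0,1:],[:1:])),
    ((1,1,1,2),([:-1,-1:],[:0,1:],[:-1,-1:],[:1,1:])),
    ((2,0,1,2),([:0,-1:],0,[:-1,-1:],[:1,1:]))]"

definition cert3 :: "(nat \<times> int \<times> int \<times> nat) list list" where
  "cert3 = [[(1,1,1,0),(2,1,1,0),(3,1,1,0),(3,(-1),(-1),1)],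
    [(2,1,1,0),(0,1,1,0),(4,1,1,0),(4,(-1),(-1),1)],
    [(0,1,1,0),(1,1,1,0),(5,1,1,0),(5,(-1),(-1),1)],
    [(6,1,1,0),(7,1,1,0),(0,(-1),(-1),2),(0,1,1,0)],
    [(8,1,1,0),(9,1,1,0),(1,(-1),(-1),2),(1,1,1,0)],
    [(10,1,1,0),(11,1,1,0),(2,(-1),(-1),2),(2,1,1,0)],
    [(7,1,1,0),(3,1,1,0),(11,1,1,1),(11,(-1),(-1),2)],
    [(3,1,1,0),(6,1,1,0),(8,(-1),(-1),1),(8,1,1,2)],
    [(9,1,1,0),(4,1,1,0),(7,1,1,1),(7,(-1),(-1),2)],
    [(4,1,1,0),(8,1,1,0),(10,(-1),(-1),1),(10,1,1,2)],
    [(11,1,1,0),(5,1,1,0),(9,1,1,1),(9,(-1),(-1),2)],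
    [(5,1,1,0),(10,1,1,0),(6,(-1),(-1),1),(6,1,1,2)]]"

definition tab4 :: "(imat \<times> pmat) list" where
  "tab4 = [((1,0,0,1),([:1:],0,0,[:1:])),
    ((1,1,0,1),([:0,1:],[:1:],0,[:1:])),
    ((1,3,0,1),([:0,-1:],[:0,1:],0,[:1:])),
    ((0,3,1,0),(0,[:0,1:],[:1:],0)),
    ((1,2,0,1),([:-1:],[:1,1:],0,[:1:])),
    ((0,3,1,1),(0,[:0,1:],[:0,1:],[:1:])),
    ((0,3,1,3),(0,[:0,1:],[:0,-1:],[:0,1:])),
    ((1,3,1,0),([:1:],[:-1:],[:1:],0)),
    ((3,3,1,0),([:0,1:],[:1:],[:1:],0)),
    ((0,3,1,2),(0,[:0,1:],[:-1:],[:1,1:])),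
    ((1,0,1,1),([:0,1:],0,[:0,1:],[:1:])),
    ((3,2,1,1),([:-1:],[:1,1:],[:0,1:],[:1:])),
    ((1,2,1,3),([:0,-1:],[:-1,1:],[:0,-1:],[:0,1:])),
    ((3,0,1,3),([:1:],0,[:0,-1:],[:0,1:])),
    ((2,3,1,0),([:1,1:],[:0,-1:],[:1:],0)),
    ((1,1,1,2),([:-1:],[:0,1:],[:-1:],[:1,1:])),
    ((3,1,1,2),([:0,-1:],[:0,1:],[:-1:],[:1,1:])),
    ((2,1,1,1),([:-1,1:],[:1:],[:0,1:],[:1:])),
    ((2,1,1,3),([:1,-1:],[:-1:],[:0,-1:],[:0,1:])),
    ((3,0,2,3),([:0,1:],0,[:1,1:],[:0,-1:])),
    ((2,3,1,2),([:-1,-1:],[:0,1:],[:-1:],[:1,1:])),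
    ((3,3,2,1),([:-1:],[:0,1:],[:-1,1:],[:1:])),
    ((3,1,2,1),([:1:],[:-1:],[:1,-1:],[:-1:])),
    ((3,2,2,3),([:0,-1:],[:-1,1:],[:-1,-1:],[:0,1:]))]"

definition cert4 :: "(nat \<times> int \<times> int \<times> nat) list list" where
  "cert4 = [[(1,1,1,0),(2,1,1,0),(3,1,1,0),(3,(-1),1,3)],
    [(4,1,1,0),(0,1,1,0),(5,1,1,0),(5,(-1),1,3)],
    [(0,1,1,0),(4,1,1,0),(6,1,1,0),(6,(-1),1,3)],
    [(7,1,1,0),(8,1,1,0),(0,(-1),1,1),(0,1,1,0)],
    [(2,1,1,0),(1,1,1,0),(9,1,1,0),(9,(-1),1,3)],
    [(10,1,1,0),(11,1,1,0),(1,(-1),1,1),(1,1,1,0)],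
    [(12,1,1,0),(13,1,1,0),(2,(-1),1,1),(2,1,1,0)],
    [(14,1,1,0),(3,1,1,0),(13,1,1,1),(13,(-1),1,0)],
    [(3,1,1,0),(14,1,1,0),(10,(-1),1,0),(10,1,1,3)],
    [(15,1,1,0),(16,1,1,0),(4,(-1),1,1),(4,1,1,0)],
    [(17,1,1,0),(5,1,1,0),(8,1,1,1),(8,(-1),1,0)],
    [(5,1,1,0),(17,1,1,0),(15,(-1),1,0),(15,1,1,3)],
    [(18,1,1,0),(6,1,1,0),(16,1,1,1),(16,(-1),1,0)],
    [(6,1,1,0),(18,1,1,0),(7,(-1),1,0),(7,1,1,3)],
    [(8,1,1,0),(7,1,1,0),(19,1,1,0),(19,(-1),1,3)],
    [(20,1,1,0),(9,1,1,0),(11,1,1,1),(11,(-1),1,0)],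
    [(9,1,1,0),(20,1,1,0),(12,(-1),1,0),(12,1,1,3)],
    [(11,1,1,0),(10,1,1,0),(21,1,1,0),(21,(-1),1,3)],
    [(13,1,1,0),(12,1,1,0),(22,1,1,0),(22,(-1),1,3)],
    [(22,(-1),1,1),(21,(-1),1,3),(14,(-1),1,1),(14,1,1,0)],
    [(16,1,1,0),(15,1,1,0),(23,1,1,0),(23,(-1),1,3)],
    [(19,(-1),1,1),(23,(-1),1,3),(17,(-1),1,1),(17,1,1,0)],
    [(23,(-1),1,1),(19,(-1),1,3),(18,(-1),1,1),(18,1,1,0)],
    [(21,(-1),1,1),(22,(-1),1,3),(20,(-1),1,1),(20,1,1,0)]]"

definition tab5 :: "(imat \<times> pmat) list" where
  "tab5 = [((1,0,0,1),([:1:],0,0,[:1:])),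
    ((1,1,0,1),([:0,1:],[:1:],0,[:1:])),
    ((1,4,0,1),([:-1,-1,-1,-1:],[:1,1,1,1:],0,[:1:])),
    ((0,4,1,0),(0,[:1,1,1,1:],[:1:],0)),
    ((1,2,0,1),([:0,0,1:],[:1,1:],0,[:1:])),
    ((0,4,1,1),(0,[:1,1,1,1:],[:0,1:],[:1:])),
    ((1,3,0,1),([:0,0,0,1:],[:1,1,1:],0,[:1:])),
    ((0,4,1,4),(0,[:1,1,1,1:],[:-1,-1,-1,-1:],[:1,1,1,1:])),
    ((1,4,1,0),([:1:],[:-1:],[:1:],0)),
    ((4,4,1,0),([:1,1,1,1:],[:0,0,0,-1:],[:1:],0)),
    ((0,4,1,2),(0,[:1,1,1,1:],[:0,0,1:],[:1,1:])),
    ((1,0,1,1),([:0,1:],0,[:0,1:],[:1:])),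
    ((4,3,1,1),([:-1:],[:1,1,1:],[:0,1:],[:1:])),
    ((0,4,1,3),(0,[:1,1,1,1:],[:0,0,0,1:],[:1,1,1:])),
    ((1,3,1,4),([:-1,-1,-1,-1:],[:0,1,1,1:],[:-1,-1,-1,-1:],[:1,1,1,1:])),
    ((4,0,1,4),([:0,0,0,-1:],0,[:-1,-1,-1,-1:],[:1,1,1,1:])),
    ((2,4,1,0),([:1,1:],[:0,-1:],[:1:],0)),
    ((3,4,1,0),([:1,1,1:],[:0,0,-1:],[:1:],0)),
    ((1,1,1,2),([:0,0,1:],[:0,1:],[:0,0,1:],[:1,1:])),
    ((4,2,1,2),([:0,-1:],[:0,1,1:],[:0,0,1:],[:1,1:])),
    ((2,1,1,1),([:0,1,1:],[:1:],[:0,1:],[:1:])),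
    ((3,2,1,1),([:0,1,1,1:],[:1,1:],[:0,1:],[:1:])),
    ((1,2,1,3),([:0,0,0,1:],[:0,1,1:],[:0,0,0,1:],[:1,1,1:])),
    ((4,1,1,3),([:0,0,-1:],[:0,0,1:],[:0,0,0,1:],[:1,1,1:])),
    ((2,2,1,4),([:0,-1,-1,-1:],[:0,0,1,1:],[:-1,-1,-1,-1:],[:1,1,1,1:])),
    ((3,1,1,4),([:0,0,-1,-1:],[:0,0,0,1:],[:-1,-1,-1,-1:],[:1,1,1,1:])),
    ((4,0,2,4),([:1,1,1,1:],0,[:1,1:],[:0,-1:])),
    ((4,0,3,4),([:1,1,1,1:],0,[:1,1,1:],[:0,0,-1:])),
    ((2,3,1,2),([:0,0,1,1:],[:1,1,1:],[:0,0,1:],[:1,1:])),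
    ((3,0,1,2),([:-1,-1:],[:1,2,1,1:],[:0,0,1:],[:1,1:])),
    ((4,4,2,1),([:-1:],[:1,1,1,1:],[:0,1,1:],[:1:])),
    ((4,4,3,2),([:-1:],[:1,1,1,1:],[:0,1,1,1:],[:1,1:])),
    ((2,0,1,3),([:-1,-1,-1:],[:1,1,2,1:],[:0,0,0,1:],[:1,1,1:])),
    ((3,3,1,3),([:0,-1,-1:],[:0,1,1,1:],[:0,0,0,1:],[:1,1,1:])),
    ((4,1,2,2),([:0,0,0,-1:],[:0,0,0,1:],[:0,-1,-1,-1:],[:0,0,1,1:])),
    ((4,1,3,1),([:0,0,0,-1:],[:0,0,0,1:],[:0,0,-1,-1:],[:0,0,0,1:])),
    ((2,1,2,4),([:0,1,1:],[:1:],[:1,1:],[:0,-1:])),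
    ((2,4,3,4),([:0,1,1:],[:0,0,-1:],[:1,1,1:],[:0,0,-1:])),
    ((4,3,2,3),([:0,-1:],[:0,1,1,1:],[:0,0,1,1:],[:1,1,1:])),
    ((4,3,3,0),([:0,-1:],[:0,1,1,1:],[:-1,-1:],[:1,2,1,1:])),
    ((2,3,2,1),([:0,0,1,1:],[:1,1,1:],[:0,1,1:],[:1:])),
    ((2,1,3,2),([:0,0,1,1:],[:0,1:],[:0,1,1,1:],[:1,1:])),
    ((4,2,2,0),([:0,0,-1:],[:0,0,1,1:],[:-1,-1,-1:],[:1,1,2,1:])),
    ((4,2,3,3),([:0,0,-1:],[:0,0,1,1:],[:0,-1,-1:],[:0,1,1,1:])),
    ((2,4,2,2),([:1,1:],[:0,-1:],[:0,-1,-1,-1:],[:0,0,1,1:])),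
    ((2,2,3,1),([:1,1:],[:-1,-1,-1:],[:0,0,-1,-1:],[:0,0,0,1:])),
    ((0,2,2,4),([:1,2,1,1:],[:0,-1,-1,-1:],[:1,1:],[:0,-1:])),
    ((0,3,3,4),([:1,1,2,1:],[:0,0,-1,-1:],[:1,1,1:],[:0,0,-1:])),
    ((2,0,2,3),([:-1,-1,-1:],[:1,1,2,1:],[:0,0,1,1:],[:1,1,1:])),
    ((2,3,3,0),([:-1,-1,-1:],[:0,1,1,1:],[:-1,-1:],[:1,2,1,1:])),
    ((0,3,3,2),([:-1,0,0,1:],[:1,1,1:],[:0,1,1,1:],[:1,1:])),
    ((2,2,2,0),([:0,-1,-1,-1:],[:0,0,1,1:],[:-1,-1,-1:],[:1,1,2,1:])),
    ((2,0,3,3),([:0,-1,-1,-1:],[:-1,0,0,1:],[:0,-1,-1:],[:0,1,1,1:])),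
    ((0,2,2,2),([:1,0,0,-1:],[:-1,-1,-1:],[:0,-1,-1,-1:],[:0,0,1,1:])),
    ((3,1,0,2),([:0,1,1,1:],[:1:],[:1,2,1,1:],[:0,-1,-1,-1:])),
    ((2,1,0,3),([:0,0,1,1:],[:0,1:],[:1,1,2,1:],[:0,0,-1,-1:])),
    ((0,3,3,0),([:-1,-2,-1,-1:],[:0,1,1,1:],[:-1,-1:],[:1,2,1,1:])),
    ((2,3,0,3),([:-1,-1,-1:],[:0,1,1,1:],[:-1,0,0,1:],[:1,1,1:])),
    ((3,3,0,2),([:1,1,1:],[:0,-1,-1:],[:1,0,0,-1:],[:-1,-1,-1:])),
    ((2,0,0,3),([:0,-1,-1,-1:],[:-1,0,0,1:],[:-1,-2,-1,-1:],[:0,1,1,1:]))]"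

definition cert5 :: "(nat \<times> int \<times> int \<times> nat) list list" where
  "cert5 = [[(1,1,1,0),(2,1,1,0),(3,1,1,0),(3,(-1),(-1),1)],
    [(4,1,1,0),(0,1,1,0),(5,1,1,0),(5,(-1),(-1),1)],
    [(0,1,1,0),(6,1,1,0),(7,1,1,0),(7,(-1),(-1),1)],
    [(8,1,1,0),(9,1,1,0),(0,(-1),(-1),4),(0,1,1,0)],
    [(6,1,1,0),(1,1,1,0),(10,1,1,0),(10,(-1),(-1),1)],
    [(11,1,1,0),(12,1,1,0),(1,(-1),(-1),4),(1,1,1,0)],
    [(2,1,1,0),(4,1,1,0),(13,1,1,0),(13,(-1),(-1),1)],
    [(14,1,1,0),(15,1,1,0),(2,(-1),(-1),4),(2,1,1,0)],
    [(16,1,1,0),(3,1,1,0),(15,1,1,1),(15,(-1),(-1),2)],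
    [(3,1,1,0),(17,1,1,0),(11,(-1),(-1),3),(11,1,1,4)],
    [(18,1,1,0),(19,1,1,0),(4,(-1),(-1),4),(4,1,1,0)],
    [(20,1,1,0),(5,1,1,0),(9,1,1,1),(9,(-1),(-1),2)],
    [(5,1,1,0),(21,1,1,0),(18,(-1),(-1),3),(18,1,1,4)],
    [(22,1,1,0),(23,1,1,0),(6,(-1),(-1),4),(6,1,1,0)],
    [(24,1,1,0),(7,1,1,0),(23,1,1,1),(23,(-1),(-1),2)],
    [(7,1,1,0),(25,1,1,0),(8,(-1),(-1),3),(8,1,1,4)],
    [(17,1,1,0),(8,1,1,0),(26,1,1,0),(26,(-1),(-1),1)],
    [(9,1,1,0),(16,1,1,0),(27,1,1,0),(27,(-1),(-1),1)],
    [(28,1,1,0),(10,1,1,0),(12,1,1,1),(12,(-1),(-1),2)],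
    [(10,1,1,0),(29,1,1,0),(22,(-1),(-1),3),(22,1,1,4)],
    [(21,1,1,0),(11,1,1,0),(30,1,1,0),(30,(-1),(-1),1)],
    [(12,1,1,0),(20,1,1,0),(31,1,1,0),(31,(-1),(-1),1)],
    [(32,1,1,0),(13,1,1,0),(19,1,1,1),(19,(-1),(-1),2)],
    [(13,1,1,0),(33,1,1,0),(14,(-1),(-1),3),(14,1,1,4)],
    [(25,1,1,0),(14,1,1,0),(34,1,1,0),(34,(-1),(-1),1)],
    [(15,1,1,0),(24,1,1,0),(35,1,1,0),(35,(-1),(-1),1)],
    [(35,(-1),(-1),3),(36,1,1,0),(16,(-1),(-1),4),(16,1,1,0)],
    [(37,1,1,0),(30,(-1),(-1),2),(17,(-1),(-1),4),(17,1,1,0)],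
    [(29,1,1,0),(18,1,1,0),(38,1,1,0),(38,(-1),(-1),1)],
    [(19,1,1,0),(28,1,1,0),(39,1,1,0),(39,(-1),(-1),1)],
    [(27,(-1),(-1),3),(40,1,1,0),(20,(-1),(-1),4),(20,1,1,0)],
    [(41,1,1,0),(38,(-1),(-1),2),(21,(-1),(-1),4),(21,1,1,0)],
    [(33,1,1,0),(22,1,1,0),(42,1,1,0),(42,(-1),(-1),1)],
    [(23,1,1,0),(32,1,1,0),(43,1,1,0),(43,(-1),(-1),1)],
    [(43,(-1),(-1),3),(44,1,1,0),(24,(-1),(-1),4),(24,1,1,0)],
    [(45,1,1,0),(26,(-1),(-1),2),(25,(-1),(-1),4),(25,1,1,0)],
    [(26,1,1,0),(46,1,1,0),(37,(-1),(-1),3),(37,1,1,4)],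
    [(47,1,1,0),(27,1,1,0),(36,1,1,1),(36,(-1),(-1),2)],
    [(31,(-1),(-1),3),(48,1,1,0),(28,(-1),(-1),4),(28,1,1,0)],
    [(49,1,1,0),(42,(-1),(-1),2),(29,(-1),(-1),4),(29,1,1,0)],
    [(30,1,1,0),(47,(-1),(-1),3),(41,(-1),(-1),3),(41,1,1,4)],
    [(50,1,1,0),(31,1,1,0),(40,1,1,1),(40,(-1),(-1),2)],
    [(39,(-1),(-1),3),(51,1,1,0),(32,(-1),(-1),4),(32,1,1,0)],
    [(52,1,1,0),(34,(-1),(-1),2),(33,(-1),(-1),4),(33,1,1,0)],
    [(34,1,1,0),(53,1,1,0),(45,(-1),(-1),3),(45,1,1,4)],
    [(46,(-1),(-1),2),(35,1,1,0),(44,1,1,1),(44,(-1),(-1),2)],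
    [(36,1,1,0),(45,(-1),(-1),3),(54,1,1,0),(54,(-1),(-1),1)],
    [(40,(-1),(-1),2),(37,1,1,0),(55,1,1,0),(55,(-1),(-1),1)],
    [(38,1,1,0),(50,(-1),(-1),3),(49,(-1),(-1),3),(49,1,1,4)],
    [(56,1,1,0),(39,1,1,0),(48,1,1,1),(48,(-1),(-1),2)],
    [(48,(-1),(-1),2),(41,1,1,0),(57,1,1,0),(57,(-1),(-1),1)],
    [(42,1,1,0),(56,(-1),(-1),3),(52,(-1),(-1),3),(52,1,1,4)],
    [(53,(-1),(-1),2),(43,1,1,0),(51,1,1,1),(51,(-1),(-1),2)],
    [(44,1,1,0),(52,(-1),(-1),3),(58,1,1,0),(58,(-1),(-1),1)],
    [(58,1,1,1),(55,(-1),(-1),2),(46,(-1),(-1),4),(46,1,1,0)],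
    [(54,(-1),(-1),3),(57,1,1,4),(47,(-1),(-1),4),(47,1,1,0)],
    [(51,(-1),(-1),2),(49,1,1,0),(59,1,1,0),(59,(-1),(-1),1)],
    [(55,1,1,1),(59,1,1,4),(50,(-1),(-1),4),(50,1,1,0)],
    [(59,(-1),(-1),4),(54,1,1,4),(53,(-1),(-1),4),(53,1,1,0)],
    [(57,1,1,1),(58,(-1),(-1),1),(56,(-1),(-1),4),(56,1,1,0)]]"

definition ev :: "complex \<Rightarrow> int poly \<Rightarrow> complex" where
  "ev z p = poly (map_poly of_int p) z"

lemma ev_add[simp]: "ev z (p + q) = ev z p + ev z q"
proof -
  have "map_poly (of_int::int\<Rightarrow>complex) (p + q) = map_poly of_int p + map_poly of_int q"
    by (rule poly_eqI) (simp add: coeff_map_poly)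
  thus ?thesis by (simp add: ev_def)
qed

lemma ev_smult[simp]: "ev z (smult a p) = of_int a * ev z p"
proof -
  have "map_poly (of_int::int\<Rightarrow>complex) (smult a p) = smult (of_int a) (map_poly of_int p)"
    by (rule poly_eqI) (simp add: coeff_map_poly)
  thus ?thesis by (simp add: ev_def)
qed

lemma ev_pCons[simp]: "ev z (pCons a p) = of_int a + z * ev z p"
  by (simp add: ev_def map_poly_pCons)

lemma ev_0[simp]: "ev z 0 = 0" by (simp add: ev_def)

lemma ev_mult[simp]: "ev z (p * q) = ev z p * ev z q"
  by (induction p) (simp_all add: algebra_simps)

lemma ev_uminus[simp]: "ev z (- p) = - ev z p"
  using ev_smult[of z "-1" p] by simp

lemma ev_1[simp]: "ev z 1 = 1"
  using ev_pCons[of z 1 0] by (simp add: one_pCons)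

lemma ev_monom[simp]: "ev z (monom 1 j) = z ^ j"
  by (induction j) (simp_all add: monom_Suc)

lemma ev_pseudo_mod:
  assumes "lead_coeff F = 1" "F \<noteq> 0" "ev z F = 0"
  shows "ev z (pseudo_mod p F) = ev z p"
proof -
  obtain q r where qr: "pseudo_divmod p F = (q, r)" by (cases "pseudo_divmod p F") auto
  from pseudo_divmod(1)[OF assms(2) qr] assms(1) have "p = F * q + r" by simp
  hence "ev z p = ev z r" using assms(3) by simp
  moreover have "pseudo_mod p F = r" using qr by (simp add: pseudo_mod_def)
  ultimately show ?thesis by simp
qed

lemma mat2_mult: "mat2 a b c d ** mat2 e f g h = mat2 (a*e+b*g) (a*f+b*h) (c*e+d*g) (c*f+d*h)"
  unfolding mat2_def matrix_matrix_mult_def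
  by (simp add: vec_eq_iff sum_2 forall_2)

lemma mat2_eq_iff: "mat2 a b c d = mat2 e f g h \<longleftrightarrow> a = e \<and> b = f \<and> c = g \<and> d = h"
  unfolding mat2_def by (auto simp: vec_eq_iff forall_2)

lemma mat2_1: "mat 1 = mat2 1 0 0 1"
  unfolding mat2_def mat_def by (simp add: vec_eq_iff forall_2)

fun icm :: "imat \<Rightarrow> complex^2^2" where
  "icm (a,b,c,d) = mat2 (of_int a) (of_int b) (of_int c) (of_int d)"

fun evmc :: "complex \<Rightarrow> complex \<Rightarrow> pmat \<Rightarrow> complex^2^2" where
  "evmc z c (a,b,c',d) = mat2 (c * ev z a) (c * ev z b) (c * ev z c') (c * ev z d)"

lemma icm_mul: "icm A ** icm B = icm (imul A B)"
  by (cases A; cases B) (simp add: mat2_mult)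

lemma gen_1: "gen_mat g 1 = icm (gen_i g)"
  by (cases g) (simp_all add: Rq_def Sq_def Rq_inv_def Sq_inv_def)

lemma evmc_mul: "evmc z 1 G ** evmc z c B = evmc z c (pmul G B)"
  by (cases G; cases B) (simp add: mat2_mult algebra_simps)

lemma gen_z:
  assumes "z ^ n = 1" "n > 0"
  shows "gen_mat g z = evmc z 1 (gen_p n g)"
proof -
  have "z * z ^ (n - 1) = z ^ n" using assms(2) by (cases n) auto
  hence "z * z ^ (n - 1) = 1" using assms(1) by simp
  hence inv: "inverse z = z ^ (n - 1)" by (rule inverse_unique)
  show ?thesis
    by (cases g) (simp_all add: Rq_def Sq_def Rq_inv_def Sq_inv_def inv)
qed

lemma red4_ev:
  assumes "lead_coeff F = 1" "F \<noteq> 0" "ev z F = 0"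
  shows "evmc z c (red4 F B) = evmc z c B"
  by (cases B) (simp add: ev_pseudo_mod[OF assms])

lemma pscal_ev: "evmc z c (pscal s j B) = evmc z (c * of_int s * z ^ j) B"
  by (cases B) (simp add: mult_ac)

lemma modl: "(x * y + u * v) mod m = (x * y2 + u * v2) mod m" if "y mod m = y2 mod m" "v mod m = v2 mod m"
    for x y u v y2 v2 m :: int
  by (rule mod_add_cong[OF mod_mult_cong[OF refl that(1)] mod_mult_cong[OF refl that(2)]])

lemma imod_mul_cong:
  assumes "imod n A = imod n A2"
  shows "imod n (imul G A) = imod n (imul G A2)"
proof -
  obtain a b c d where A: "A = (a,b,c,d)" by (cases A) auto
  obtain a2 b2 c2 d2 where A2: "A2 = (a2,b2,c2,d2)" by (cases A2) auto
  obtain e f g h where G: "G = (e,f,g,h)" by (cases G) auto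
  have h: "a mod int n = a2 mod int n \<and> b mod int n = b2 mod int n \<and>
      c mod int n = c2 mod int n \<and> d mod int n = d2 mod int n"
    using assms unfolding A A2 by (simp only: imod.simps prod.inject)
  from h have h1: "a mod int n = a2 mod int n" and h2: "b mod int n = b2 mod int n"
    and h3: "c mod int n = c2 mod int n" and h4: "d mod int n = d2 mod int n" by auto
  show ?thesis unfolding A A2 G imul.simps imod.simps prod.inject
    using modl[OF h1 h3] modl[OF h2 h4] by blast
qed

lemma imod_ismul_cong:
  assumes "imod n A = imod n A2"
  shows "imod n (ismul s A) = imod n (ismul s A2)"
proof -
  obtain a b c d where A: "A = (a,b,c,d)" by (cases A) auto
  obtain a2 b2 c2 d2 where A2: "A2 = (a2,b2,c2,d2)" by (cases A2) auto
  have h: "a mod int n = a2 mod int n \<and> b mod int n = b2 mod int n \<and>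
      c mod int n = c2 mod int n \<and> d mod int n = d2 mod int n"
    using assms unfolding A A2 by (simp only: imod.simps prod.inject)
  from h have h1: "a mod int n = a2 mod int n" and h2: "b mod int n = b2 mod int n"
    and h3: "c mod int n = c2 mod int n" and h4: "d mod int n = d2 mod int n" by auto
  show ?thesis unfolding A A2 ismul.simps imod.simps prod.inject
    using mod_mult_cong[OF refl h1] mod_mult_cong[OF refl h2] mod_mult_cong[OF refl h3]
      mod_mult_cong[OF refl h4] by blast
qed

lemma imul_ismul: "imul G (ismul s A) = ismul s (imul G A)"
  by (cases G; cases A) (simp add: algebra_simps)

lemma ismul_ismul: "ismul s (ismul t A) = ismul (s*t) A"
  by (cases A) (simp add: algebra_simps)

lemma ismul_1: "ismul 1 A = A"
  by (cases A) simp

lemma invariant: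
  assumes chk: "check n F tab cert"
    and F: "lead_coeff F = 1" "F \<noteq> 0" "ev z F = 0"
    and zn: "z ^ n = 1" "n > 0"
  shows "\<exists>i<length tab. \<exists>\<sigma>\<in>{1,-1::int}. \<exists>A. word_mat w 1 = icm A \<and>
           imod n A = imod n (ismul \<sigma> (fst (tab ! i))) \<and>
           (\<exists>s\<in>{1,-1::int}. \<exists>j. word_mat w z = evmc z (of_int s * z ^ j) (snd (tab ! i)))"
proof (induction w)
  case Nil
  from chk have ne: "tab \<noteq> []" and hd: "hd tab = ((1,0,0,1),(1,0,0,1))"
    by (auto simp: check_def)
  hence t0: "tab ! 0 = ((1,0,0,1),(1,0,0,1))" by (simp add: hd_conv_nth)
  have a1: "word_mat [] 1 = icm (1,0,0,1)" by (simp add: mat2_1)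
  have a2: "imod n (1,0,0,1) = imod n (ismul 1 (fst (tab ! 0)))" by (simp add: t0)
  have a3: "word_mat [] z = evmc z (of_int 1 * z ^ 0) (snd (tab ! 0))" by (simp add: t0 mat2_1)
  have a4: "0 < length tab" using ne by simp
  show ?case using a1 a2 a3 a4 by blast
next
  case (Cons g w)
  then obtain i \<sigma> A s j where i: "i < length tab" and \<sigma>: "\<sigma> \<in> {1,-1}"
    and A: "word_mat w 1 = icm A" "imod n A = imod n (ismul \<sigma> (fst (tab ! i)))"
    and s: "s \<in> {1,-1}" and B: "word_mat w z = evmc z (of_int s * z ^ j) (snd (tab ! i))"
    by blast
  from chk have la: "list_all2 (\<lambda>(A,B) cs. list_all2 (cond n F tab A B) [GR,GRi,GS,GSi] cs) tab cert"
    by (simp add: check_def)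
  hence "length cert = length tab" by (simp add: list_all2_lengthD)
  from la i have "(\<lambda>(A,B) cs. list_all2 (cond n F tab A B) [GR,GRi,GS,GSi] cs) (tab ! i) (cert ! i)"
    by (simp add: list_all2_nthD)
  hence la2: "list_all2 (cond n F tab (fst (tab ! i)) (snd (tab ! i))) [GR,GRi,GS,GSi] (cert ! i)"
    by (cases "tab ! i") simp
  have "\<exists>m<4. [GR,GRi,GS,GSi] ! m = g" by (cases g) (auto intro: exI[of _ 0] exI[of _ 1] exI[of _ 2] exI[of _ 3])
  then obtain m where m: "m < 4" "[GR,GRi,GS,GSi] ! m = g" by blast
  from la2 m have "cond n F tab (fst (tab ! i)) (snd (tab ! i)) g (cert ! i ! m)"
    using list_all2_nthD[OF la2, of m] by simp
  then obtain k \<sigma>2 s2 j2 where k: "k < length tab" "\<sigma>2 \<in> {1,-1}" "s2 \<in> {1,-1}"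
    and ci: "imod n (imul (gen_i g) (fst (tab ! i))) = imod n (ismul \<sigma>2 (fst (tab ! k)))"
    and cp: "red4 F (pmul (gen_p n g) (snd (tab ! i))) = red4 F (pscal s2 j2 (snd (tab ! k)))"
    by (cases "cert ! i ! m") auto
  have w1: "word_mat (g # w) 1 = icm (imul (gen_i g) A)"
    by (simp add: A gen_1 icm_mul)
  have "imod n (imul (gen_i g) A) = imod n (imul (gen_i g) (ismul \<sigma> (fst (tab ! i))))"
    by (rule imod_mul_cong[OF A(2)])
  also have "\<dots> = imod n (ismul \<sigma> (imul (gen_i g) (fst (tab ! i))))" by (simp add: imul_ismul)
  also have "\<dots> = imod n (ismul \<sigma> (ismul \<sigma>2 (fst (tab ! k))))" by (rule imod_ismul_cong[OF ci])
  finally have c1: "imod n (imul (gen_i g) A) = imod n (ismul (\<sigma> * \<sigma>2) (fst (tab ! k)))"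
    by (simp add: ismul_ismul)
  have "word_mat (g # w) z = evmc z 1 (gen_p n g) ** evmc z (of_int s * z ^ j) (snd (tab ! i))"
    by (simp add: B gen_z[OF zn])
  also have "\<dots> = evmc z (of_int s * z ^ j) (pmul (gen_p n g) (snd (tab ! i)))" by (rule evmc_mul)
  also have "\<dots> = evmc z (of_int s * z ^ j) (red4 F (pmul (gen_p n g) (snd (tab ! i))))"
    by (rule red4_ev[OF F, symmetric])
  also have "\<dots> = evmc z (of_int s * z ^ j) (pscal s2 j2 (snd (tab ! k)))"
    by (simp add: cp red4_ev[OF F])
  also have "\<dots> = evmc z (of_int (s * s2) * z ^ (j + j2)) (snd (tab ! k))"
    by (simp add: pscal_ev power_add mult_ac)
  finally have c2: "word_mat (g # w) z = evmc z (of_int (s * s2) * z ^ (j + j2)) (snd (tab ! k))" .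
  have ss: "\<sigma> * \<sigma>2 \<in> {1,-1}" "s * s2 \<in> {1,-1}" using \<sigma> s k by auto
  show ?case
    using k(1) ss w1 c1 c2 by blast
qed
lemma final_core:
  assumes chk: "check n F tab cert"
    and F: "lead_coeff F = 1" "F \<noteq> 0" "ev z F = 0"
    and zn: "z ^ n = 1" "n > 0"
    and hyp: "\<exists>\<epsilon>::int. \<epsilon> \<in> {1, -1} \<and> (\<exists>a b c d :: int.
           word_mat w 1 = mat2 (of_int a) (of_int b) (of_int c) (of_int d) \<and>
           [a = \<epsilon>] (mod int n) \<and> [b = 0] (mod int n) \<and>
           [c = 0] (mod int n) \<and> [d = \<epsilon>] (mod int n))"
  shows "\<exists>\<epsilon>::complex. \<epsilon> \<in> {1, -1} \<and> (\<exists>j<n.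
           word_mat w z $ 1 $ 1 = \<epsilon> * z ^ j \<and> word_mat w z $ 2 $ 2 = \<epsilon> * z ^ j \<and>
           word_mat w z $ 1 $ 2 = 0 \<and> word_mat w z $ 2 $ 1 = 0)"
proof -
  obtain i \<sigma> A s j where i: "i < length tab" and \<sigma>: "\<sigma> \<in> {1,-1}"
    and A: "word_mat w 1 = icm A" "imod n A = imod n (ismul \<sigma> (fst (tab ! i)))"
    and s: "s \<in> {1,-1}" and B: "word_mat w z = evmc z (of_int s * z ^ j) (snd (tab ! i))"
    using invariant[OF chk F zn, of w] by blast
  obtain \<epsilon> a b c d where \<epsilon>: "\<epsilon> \<in> {1,-1::int}"
    and M1: "word_mat w 1 = mat2 (of_int a) (of_int b) (of_int c) (of_int d)"
    and cg: "[a = \<epsilon>] (mod int n)" "[b = 0] (mod int n)" "[c = 0] (mod int n)" "[d = \<epsilon>] (mod int n)"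
    using hyp by blast
  obtain a1 b1 c1 d1 where A1: "A = (a1,b1,c1,d1)" by (cases A) auto
  from A(1) M1 have "A = (a,b,c,d)" by (simp add: A1 mat2_eq_iff)
  with cg have "imod n A = imod n (ismul \<epsilon> (1,0,0,1))" by (simp add: cong_def)
  with A(2) have "imod n (ismul \<sigma> (fst (tab ! i))) = imod n (ismul \<epsilon> (1,0,0,1))" by simp
  hence "imod n (ismul \<sigma> (ismul \<sigma> (fst (tab ! i)))) = imod n (ismul \<sigma> (ismul \<epsilon> (1,0,0,1)))"
    by (rule imod_ismul_cong)
  moreover have "\<sigma> * \<sigma> = 1" using \<sigma> by auto
  ultimately have e: "imod n (fst (tab ! i)) = imod n (ismul (\<sigma> * \<epsilon>) (1,0,0,1))"
    by (simp add: ismul_ismul ismul_1 del: ismul.simps)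
  have "\<sigma> * \<epsilon> \<in> {1,-1}" using \<sigma> \<epsilon> by auto
  hence e2: "imod n (fst (tab ! i)) = imod n (1,0,0,1) \<or> imod n (fst (tab ! i)) = imod n (-1,0,0,-1)"
    using e by auto
  from chk have ne: "tab \<noteq> []" and hd: "hd tab = ((1,0,0,1),(1,0,0,1))"
    and lt: "list_all (\<lambda>(A,B). imod n A \<noteq> imod n (1,0,0,1) \<and> imod n A \<noteq> imod n (-1,0,0,-1)) (tl tab)"
    by (auto simp: check_def)
  have i0: "i = 0"
  proof (rule ccontr)
    assume "i \<noteq> 0"
    hence l1: "i - 1 < length (tl tab)" and l2: "tl tab ! (i - 1) = tab ! i" using i ne
      by (auto simp: nth_tl)
    have mem: "tab ! i \<in> set (tl tab)" using nth_mem[OF l1] l2 by simp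
    have "\<forall>x\<in>set (tl tab). imod n (fst x) \<noteq> imod n (1,0,0,1) \<and> imod n (fst x) \<noteq> imod n (-1,0,0,-1)"
      using lt by (simp add: list_all_iff split_def del: imod.simps)
    from bspec[OF this mem] have n12: "imod n (fst (tab ! i)) \<noteq> imod n (1,0,0,1) \<and>
       imod n (fst (tab ! i)) \<noteq> imod n (-1,0,0,-1)" .
    note n1 = n12[THEN conjunct1] and n2 = n12[THEN conjunct2]
    from e2 show False
    proof
      assume "imod n (fst (tab ! i)) = imod n (1,0,0,1)" with n1 show False by (rule notE)
    next
      assume "imod n (fst (tab ! i)) = imod n (-1,0,0,-1)" with n2 show False by (rule notE)
    qed
  qed
  have t0: "tab ! 0 = ((1,0,0,1),(1,0,0,1))" using ne hd by (simp add: hd_conv_nth)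
  have Bz: "word_mat w z = mat2 (of_int s * z ^ j) 0 0 (of_int s * z ^ j)"
    using B by (simp add: i0 t0)
  have zj: "z ^ j = z ^ (j mod n)"
  proof -
    have "z ^ j = z ^ (n * (j div n) + j mod n)" by simp
    also have "\<dots> = (z ^ n) ^ (j div n) * z ^ (j mod n)" by (simp only: power_add power_mult)
    also have "\<dots> = z ^ (j mod n)" by (simp add: zn(1))
    finally show ?thesis .
  qed
  show ?thesis
    apply (rule exI[of _ "of_int s"])
    using s zn(2) by (auto simp: Bz zj mat2_def intro!: exI[of _ "j mod n"])
qed
lemma chk2: "check 2 [:1,1:] tab2 cert2" by code_simp
lemma chk3: "check 3 [:1,1,1:] tab3 cert3" by code_simp
lemma chk4: "check 4 [:1,0,1:] tab4 cert4" by code_simp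
lemma chk5: "check 5 [:1,1,1,1,1:] tab5 cert5" by code_simp

lemma ev2: assumes "z ^ 2 = 1" "z \<noteq> 1" shows "ev z [:1,1:] = 0"
proof -
  have "(z - 1) * ev z [:1,1:] = z ^ 2 - 1" by (simp add: algebra_simps power2_eq_square)
  with assms show ?thesis by simp
qed

lemma ev3: assumes "z ^ 3 = 1" "z \<noteq> 1" shows "ev z [:1,1,1:] = 0"
proof -
  have "(z - 1) * ev z [:1,1,1:] = z ^ 3 - 1" by (simp add: algebra_simps eval_nat_numeral)
  with assms show ?thesis by simp
qed

lemma ev4: assumes "z ^ 4 = 1" "z ^ 2 \<noteq> 1" shows "ev z [:1,0,1:] = 0"
proof -
  have "(z ^ 2 - 1) * ev z [:1,0,1:] = z ^ 4 - 1" by (simp add: algebra_simps eval_nat_numeral)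
  with assms show ?thesis by simp
qed

lemma ev5: assumes "z ^ 5 = 1" "z \<noteq> 1" shows "ev z [:1,1,1,1,1:] = 0"
proof -
  have "(z - 1) * ev z [:1,1,1,1,1:] = z ^ 5 - 1" by (simp add: algebra_simps eval_nat_numeral)
  with assms show ?thesis by simp
qed

lemma key:
  assumes "n \<in> {2,3,4,5}" "primitive_root_of_unity n z"
  shows "\<exists>F tab cert. check n F tab cert \<and> lead_coeff F = 1 \<and> F \<noteq> 0 \<and> ev z F = 0"
proof -
  from assms(2) have zn: "z ^ n = 1" and nk: "\<And>k. 0 < k \<Longrightarrow> k < n \<Longrightarrow> z ^ k \<noteq> 1"
    by (auto simp: primitive_root_of_unity_def)
  from assms(1) consider "n = 2" | "n = 3" | "n = 4" | "n = 5" by blast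
  then show ?thesis
  proof cases
    case 1
    have "z \<noteq> 1" using nk[of 1] 1 by simp
    with zn 1 show ?thesis using chk2 ev2 by fastforce
  next
    case 2
    have "z \<noteq> 1" using nk[of 1] 2 by simp
    with zn 2 show ?thesis using chk3 ev3 by fastforce
  next
    case 3
    have "z ^ 2 \<noteq> 1" using nk[of 2] 3 by simp
    with zn 3 show ?thesis using chk4 ev4 by fastforce
  next
    case 4
    have "z \<noteq> 1" using nk[of 1] 4 by simp
    with zn 4 show ?thesis using chk5 ev5 by fastforce
  qed
qed

theorem corollary3p9:
  fixes n :: nat and \<zeta> :: complex and M :: "complex \<Rightarrow> complex^2^2"
  assumes "n \<in> {2,3,4,5}"
    and "primitive_root_of_unity n \<zeta>"
    and "M \<in> Gq"
    and "\<exists>\<epsilon>::int. \<epsilon> \<in> {1, -1} \<and> (\<exists>a b c d :: int.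
           M 1 = mat2 (of_int a) (of_int b) (of_int c) (of_int d) \<and>
           [a = \<epsilon>] (mod int n) \<and> [b = 0] (mod int n) \<and>
           [c = 0] (mod int n) \<and> [d = \<epsilon>] (mod int n))"
  shows "\<exists>\<epsilon>::complex. \<epsilon> \<in> {1, -1} \<and> (\<exists>j<n.
           M \<zeta> $ 1 $ 1 = \<epsilon> * \<zeta> ^ j \<and> M \<zeta> $ 2 $ 2 = \<epsilon> * \<zeta> ^ j \<and>
           M \<zeta> $ 1 $ 2 = 0 \<and> M \<zeta> $ 2 $ 1 = 0)"
proof -
  from assms(2) have zn: "\<zeta> ^ n = 1" and n0: "n > 0"
    by (auto simp: primitive_root_of_unity_def)
  have z0: "\<zeta> \<noteq> 0" using zn n0 by (metis power_0_left less_not_refl2 zero_neq_one)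
  from assms(3) obtain w where w: "\<And>q. q \<noteq> 0 \<Longrightarrow> M q = word_mat w q"
    by (auto simp: Gq_def)
  have M1: "M 1 = word_mat w 1" using w by simp
  have Mz: "M \<zeta> = word_mat w \<zeta>" using w z0 by simp
  obtain F tab cert where c: "check n F tab cert" "lead_coeff F = 1" "F \<noteq> 0" "ev \<zeta> F = 0"
    using key[OF assms(1,2)] by blast
  show ?thesis
    unfolding Mz
    by (rule final_core[OF c zn n0]) (use assms(4) in \<open>simp only: M1\<close>)
qed

end
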